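(* For integers $n\ge j\ge1$ and $m\ge0$ let $T_{n,j,m}$ be the number of ordered increasing $k$-trees of size $n$ in which node $j$ has out-degree $m$. Then $T_{n,j,m}=((k+1)n-km-2k)\,T_{n-1,j,m}+km\,T_{n-1,j,m-1}$ for $n>j$, and the generating function $T^{[j]}(z,v):=\sum_{n\ge j}\sum_{m\ge0}T_{n,j,m}\frac{z^{n-j}}{(n-j)!}v^m$ is given by \[ T^{[j]}(z,v)=\frac{T_j}{\Big(1-v\big(1-(1-(k+1)z)^{\frac{k}{k+1}}\big)\Big)\,(1-(k+1)z)^{\frac{kj-k+j+1}{k+1}}}, \] where $T_j=\prod_{\ell=0}^{j-1}(1+(k+1)\ell)$ is the number of ordered increasing $k$-trees of size $j$.
   Context: Fix an integer $k\ge1$. An ordered increasing $k$-tree of size $n\ge0$ is built as follows. Start with the root-clique $K_0$: $k$ pairwise adjacent vertices labelled $0_1,\dots,0_k$ (the root nodes; each label $0_\ell$ has value $0$). For $j=1,\dots,n$ in turn, node $j$ is inserted by choosing a currently existing $k$-clique $K$ and attaching $j$ to it, i.e. adding edges from $j$ to all $k$ vertices of $K$; $j$ is then a child of $K$ and the vertices of $K$ are the parents of $j$. The $k$-cliques available for attachment are the root-clique and, for every previously inserted node $x$ attached to a clique $K'$, the $k$ cliques $\{x\}\cup(K'\setminus\{w\})$, $w\in K'$. The children of each $k$-clique are linearly ordered: if $K$ currently has $d^+(K)$ children, there are $d^+(K)+1$ positions at which the new child may be placed, and the choice of position is part of the structure; distinct sequences of choices give distinct trees. The out-degree of a node $u$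 is the number of nodes having $u$ as a parent. Convention: $T_{n,j,m}=0$ for $m<0$, $T_{j,j,0}=T_j$ and $T_{j,j,m}=0$ for $m>0$. *)

theory Defs
  imports "HOL-Computational_Algebra.Formal_Power_Series"
begin

text \<open>Vertices: the root nodes 0_1..0_k are Root 1 .. Root k; node j (j >= 1) is Nd j.\<close>
datatype vtx = Root nat | Nd nat

text \<open>A tree of size n is the sequence of choices ts of length n: entry i (0-based)
  describes the insertion of node i+1, namely the clique it is attached to and the
  position (0 .. current number of children of that clique) among the children.\<close>

definition root_clique :: "nat \<Rightarrow> vtx set" where
  "root_clique k = Root ` {1..k}"

text \<open>k-cliques available for attachment after the insertions ts.\<close>
definition avail :: "nat \<Rightarrow> (vtx set \<times> nat) list \<Rightarrow> vtx set set" where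
  "avail k ts = insert (root_clique k)
     (\<Union>i<length ts. (\<lambda>w. insert (Nd (Suc i)) (fst (ts ! i) - {w})) ` fst (ts ! i))"

definition clique_outdeg :: "(vtx set \<times> nat) list \<Rightarrow> vtx set \<Rightarrow> nat" where
  "clique_outdeg ts K = card {i. i < length ts \<and> fst (ts ! i) = K}"

definition valid_tree :: "nat \<Rightarrow> (vtx set \<times> nat) list \<Rightarrow> bool" where
  "valid_tree k ts \<longleftrightarrow> (\<forall>i<length ts. fst (ts ! i) \<in> avail k (take i ts)
      \<and> snd (ts ! i) \<le> clique_outdeg (take i ts) (fst (ts ! i)))"

definition ktrees :: "nat \<Rightarrow> nat \<Rightarrow> (vtx set \<times> nat) list set" where
  "ktrees k n = {ts. length ts = n \<and> valid_tree k ts}"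

definition node_outdeg :: "(vtx set \<times> nat) list \<Rightarrow> nat \<Rightarrow> nat" where
  "node_outdeg ts u = card {i. i < length ts \<and> Nd u \<in> fst (ts ! i)}"

definition Tsize :: "nat \<Rightarrow> nat \<Rightarrow> nat" where
  "Tsize k n = card (ktrees k n)"

definition Tcount :: "nat \<Rightarrow> nat \<Rightarrow> nat \<Rightarrow> nat \<Rightarrow> nat" where
  "Tcount k n j m = card {ts \<in> ktrees k n. node_outdeg ts j = m}"

definition fps_lin_pow :: "real \<Rightarrow> real \<Rightarrow> real fps" where
  "fps_lin_pow c a = fps_binomial a oo (fps_const (- c) * fps_X)"

end

theory Submission
  imports Defs
begin


definition Vs :: "nat \<Rightarrow> nat \<Rightarrow> vtx set" where
  "Vs k n = Root ` {1..k} \<union> Nd ` {1..n}"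

definition ext :: "nat \<Rightarrow> (vtx set \<times> nat) list \<Rightarrow> (vtx set \<times> nat) set" where
  "ext k ts = Sigma (avail k ts) (\<lambda>K. {..clique_outdeg ts K})"

definition Cq :: "(vtx set \<times> nat) list \<Rightarrow> nat \<Rightarrow> vtx \<Rightarrow> vtx set" where
  "Cq ts i w = insert (Nd (Suc i)) (fst (ts ! i) - {w})"

definition Sg :: "(vtx set \<times> nat) list \<Rightarrow> (nat \<times> vtx) set" where
  "Sg ts = Sigma {..<length ts} (\<lambda>i. fst (ts ! i))"

lemma avail_snoc:
  "avail k (ts @ [x]) = avail k ts \<union> (\<lambda>w. insert (Nd (Suc (length ts))) (fst x - {w})) ` fst x"
  unfolding avail_def by (auto simp: nth_append lessThan_Suc)

lemma avail_Nil: "avail k [] = {root_clique k}"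
  unfolding avail_def by simp

lemma clique_outdeg_snoc:
  "clique_outdeg (ts @ [x]) K = clique_outdeg ts K + (if fst x = K then 1 else 0)"
proof -
  have "{i. i < length (ts @ [x]) \<and> fst ((ts @ [x]) ! i) = K}
        = {i. i < length ts \<and> fst (ts ! i) = K} \<union> (if fst x = K then {length ts} else {})"
    by (auto simp: nth_append less_Suc_eq)
  then show ?thesis unfolding clique_outdeg_def by (auto simp: card_insert_if)
qed

lemma node_outdeg_snoc:
  "node_outdeg (ts @ [x]) j = node_outdeg ts j + (if Nd j \<in> fst x then 1 else 0)"
proof -
  have "{i. i < length (ts @ [x]) \<and> Nd j \<in> fst ((ts @ [x]) ! i)}
        = {i. i < length ts \<and> Nd j \<in> fst (ts ! i)} \<union> (if Nd j \<in> fst x then {length ts} else {})"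
    by (auto simp: nth_append less_Suc_eq)
  then show ?thesis unfolding node_outdeg_def by (auto simp: card_insert_if)
qed

lemma node_outdeg_le: "node_outdeg ts j \<le> length ts"
proof -
  have "{i. i < length ts \<and> Nd j \<in> fst (ts ! i)} \<subseteq> {..<length ts}" by auto
  then show ?thesis unfolding node_outdeg_def using card_mono[of "{..<length ts}"] by fastforce
qed

lemma valid_snoc:
  "valid_tree k (ts @ [x]) \<longleftrightarrow> valid_tree k ts \<and> fst x \<in> avail k ts \<and> snd x \<le> clique_outdeg ts (fst x)"
  unfolding valid_tree_def
  by (auto simp: nth_append less_Suc_eq)

lemma valid_Nil: "valid_tree k []" unfolding valid_tree_def by simp

lemma valid_take: "valid_tree k ts \<Longrightarrow> valid_tree k (take i ts)"
  unfolding valid_tree_def by (auto simp: min_def)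

lemma avail_take: "avail k (take i ts) \<subseteq> avail k ts"
  unfolding avail_def by auto

lemma inv:
  assumes "valid_tree k ts" "k \<ge> 1"
  shows "\<forall>K\<in>avail k ts. finite K \<and> card K = k \<and> K \<subseteq> Vs k (length ts)"
  using assms(1)
proof (induction ts rule: rev_induct)
  case Nil
  have "card (root_clique k) = k" unfolding root_clique_def
    by (subst card_image) (auto simp: inj_on_def)
  then show ?case by (auto simp: avail_Nil root_clique_def Vs_def)
next
  case (snoc x ts)
  then have v: "valid_tree k ts" and xa: "fst x \<in> avail k ts" by (auto simp: valid_snoc)
  with snoc.IH have IH: "\<forall>K\<in>avail k ts. finite K \<and> card K = k \<and> K \<subseteq> Vs k (length ts)" by blast
  have sub: "Vs k (length ts) \<subseteq> Vs k (length (ts @ [x]))" by (auto simp: Vs_def)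
  have fx: "finite (fst x)" "card (fst x) = k" "fst x \<subseteq> Vs k (length ts)" using IH xa by auto
  have nd: "Nd (Suc (length ts)) \<notin> fst x"
  proof
    assume "Nd (Suc (length ts)) \<in> fst x"
    then have "Nd (Suc (length ts)) \<in> Vs k (length ts)" using fx(3) by blast
    then show False by (auto simp: Vs_def)
  qed
  have new: "finite (insert (Nd (Suc (length ts))) (fst x - {w})) \<and>
       card (insert (Nd (Suc (length ts))) (fst x - {w})) = k \<and>
       insert (Nd (Suc (length ts))) (fst x - {w}) \<subseteq> Vs k (length (ts @ [x]))"
     if w: "w \<in> fst x" for w
  proof (intro conjI)
    show "card (insert (Nd (Suc (length ts))) (fst x - {w})) = k"
      using fx w nd assms(2) by (simp add: card_insert_if)
    show "insert (Nd (Suc (length ts))) (fst x - {w}) \<subseteq> Vs k (length (ts @ [x]))"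
      using fx(3) sub by (auto simp: Vs_def)
    show "finite (insert (Nd (Suc (length ts))) (fst x - {w}))" using fx by simp
  qed
  show ?case
  proof
    fix K assume "K \<in> avail k (ts @ [x])"
    then consider "K \<in> avail k ts" | w where "w \<in> fst x" "K = insert (Nd (Suc (length ts))) (fst x - {w})"
      unfolding avail_snoc by blast
    then show "finite K \<and> card K = k \<and> K \<subseteq> Vs k (length (ts @ [x]))"
    proof cases
      case 1 then show ?thesis using IH sub by blast
    next
      case 2 then show ?thesis using new by simp
    qed
  qed
qed

lemma Ki:
  assumes "valid_tree k ts" "k \<ge> 1" "i < length ts"
  shows "finite (fst (ts ! i)) \<and> card (fst (ts ! i)) = k \<and> fst (ts ! i) \<subseteq> Vs k i
         \<and> fst (ts ! i) \<in> avail k ts"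
proof -
  have a: "fst (ts ! i) \<in> avail k (take i ts)" using assms unfolding valid_tree_def by auto
  have "valid_tree k (take i ts)" using valid_take assms by blast
  from inv[OF this assms(2)] a assms(3) show ?thesis using avail_take[of k i ts] by (auto simp: min_def)
qed

lemma avail_decomp: "avail k ts = insert (root_clique k) ((\<lambda>(i,w). Cq ts i w) ` Sg ts)"
  unfolding avail_def Sg_def Cq_def by auto

lemma Cq_sub: assumes "valid_tree k ts" "k \<ge> 1" "i < length ts"
  shows "Cq ts i w \<subseteq> Vs k (Suc i)"
  using Ki[OF assms] unfolding Cq_def Vs_def by auto

lemma Cq_inj: assumes "valid_tree k ts" "k \<ge> 1"
  shows "inj_on (\<lambda>(i,w). Cq ts i w) (Sg ts)"
proof (rule inj_onI, clarify)
  fix i w i' w' assume p: "(i, w) \<in> Sg ts" "(i', w') \<in> Sg ts" and e: "Cq ts i w = Cq ts i' w'"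
  have il: "i < length ts" "i' < length ts" "w \<in> fst (ts ! i)" "w' \<in> fst (ts ! i')"
    using p by (auto simp: Sg_def)
  have "\<not> i < i'"
  proof
    assume "i < i'"
    have "Nd (Suc i') \<in> Cq ts i' w'" by (simp add: Cq_def)
    then have "Nd (Suc i') \<in> Cq ts i w" using e by simp
    with Cq_sub[OF assms il(1)] have "Nd (Suc i') \<in> Vs k (Suc i)" by blast
    with \<open>i < i'\<close> show False by (auto simp: Vs_def)
  qed
  moreover have "\<not> i' < i"
  proof
    assume "i' < i"
    have "Nd (Suc i) \<in> Cq ts i w" by (simp add: Cq_def)
    then have "Nd (Suc i) \<in> Cq ts i' w'" using e by simp
    with Cq_sub[OF assms il(2)] have "Nd (Suc i) \<in> Vs k (Suc i')" by blast
    with \<open>i' < i\<close> show False by (auto simp: Vs_def)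
  qed
  ultimately have ii: "i = i'" by simp
  have nd: "Nd (Suc i) \<notin> fst (ts ! i)" using Ki[OF assms il(1)] by (auto simp: Vs_def)
  have "fst (ts ! i) - {w} = fst (ts ! i) - {w'}"
  proof -
    have "insert (Nd (Suc i)) (fst (ts ! i) - {w}) = insert (Nd (Suc i)) (fst (ts ! i) - {w'})"
      using e ii by (simp add: Cq_def)
    then have "insert (Nd (Suc i)) (fst (ts ! i) - {w}) - {Nd (Suc i)} =
        insert (Nd (Suc i)) (fst (ts ! i) - {w'}) - {Nd (Suc i)}" by simp
    then show ?thesis using nd by auto
  qed
  with il ii have "w = w'" by blast
  with ii show "i = i' \<and> w = w'" by simp
qed

lemma root_notin: "root_clique k \<notin> (\<lambda>(i,w). Cq ts i w) ` Sg ts"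
  unfolding root_clique_def Cq_def by auto

lemma finite_Sg: assumes "valid_tree k ts" "k \<ge> 1" shows "finite (Sg ts)"
  unfolding Sg_def using Ki[OF assms] by (auto intro!: finite_SigmaI)

lemma card_Sg: assumes "valid_tree k ts" "k \<ge> 1" shows "card (Sg ts) = k * length ts"
proof -
  have "card (Sg ts) = (\<Sum>i<length ts. card (fst (ts ! i)))"
    unfolding Sg_def using Ki[OF assms] by (subst card_SigmaI) auto
  also have "\<dots> = (\<Sum>i<length ts. k)" using Ki[OF assms] by (intro sum.cong) auto
  finally show ?thesis by simp
qed

lemma finite_avail: assumes "valid_tree k ts" "k \<ge> 1" shows "finite (avail k ts)"
  using finite_Sg[OF assms] by (simp add: avail_decomp)

lemma card_avail: assumes "valid_tree k ts" "k \<ge> 1" shows "card (avail k ts) = Suc (k * length ts)"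
  unfolding avail_decomp using finite_Sg[OF assms] root_notin card_Sg[OF assms] Cq_inj[OF assms]
  by (simp add: card_image)

lemma sum_outdeg:
  assumes "finite A"
  shows "(\<Sum>K\<in>A. clique_outdeg ts K) = card {i. i < length ts \<and> fst (ts ! i) \<in> A}"
proof -
  have "{i. i < length ts \<and> fst (ts ! i) \<in> A} = (\<Union>K\<in>A. {i. i < length ts \<and> fst (ts ! i) = K})"
    by auto
  moreover have "card (\<Union>K\<in>A. {i. i < length ts \<and> fst (ts ! i) = K}) =
      (\<Sum>K\<in>A. card {i. i < length ts \<and> fst (ts ! i) = K})"
    by (rule card_UN_disjoint[OF assms]) auto
  ultimately show ?thesis unfolding clique_outdeg_def by simp
qed

lemma finite_ext: assumes "valid_tree k ts" "k \<ge> 1" shows "finite (ext k ts)"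
  unfolding ext_def using finite_avail[OF assms] by auto

lemma card_ext_gen:
  assumes "valid_tree k ts" "k \<ge> 1" "A \<subseteq> avail k ts"
  shows "card {x \<in> ext k ts. fst x \<in> A} = card A + card {i. i < length ts \<and> fst (ts ! i) \<in> A}"
proof -
  have fA: "finite A" using finite_avail[OF assms(1,2)] assms(3) finite_subset by blast
  have "{x \<in> ext k ts. fst x \<in> A} = Sigma A (\<lambda>K. {..clique_outdeg ts K})"
    using assms(3) unfolding ext_def by auto
  then have "card {x \<in> ext k ts. fst x \<in> A} = (\<Sum>K\<in>A. Suc (clique_outdeg ts K))"
    using fA by (simp add: card_SigmaI)
  also have "\<dots> = (\<Sum>K\<in>A. 1) + (\<Sum>K\<in>A. clique_outdeg ts K)"
    unfolding sum.distrib[symmetric] by simp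
  also have "\<dots> = card A + (\<Sum>K\<in>A. clique_outdeg ts K)" by simp
  finally show ?thesis using sum_outdeg[OF fA] by simp
qed

lemma card_ext: assumes "valid_tree k ts" "k \<ge> 1"
  shows "card (ext k ts) = (k + 1) * length ts + 1"
proof -
  have "ext k ts = {x \<in> ext k ts. fst x \<in> avail k ts}" unfolding ext_def by auto
  then have "card (ext k ts) = card (avail k ts) + card {i. i < length ts \<and> fst (ts ! i) \<in> avail k ts}"
    using card_ext_gen[OF assms order_refl] by simp
  also have "{i. i < length ts \<and> fst (ts ! i) \<in> avail k ts} = {..<length ts}"
    using Ki[OF assms] by auto
  finally show ?thesis using card_avail[OF assms] by simp
qed

lemma card_Sj:
  assumes "valid_tree k ts" "k \<ge> 1" "1 \<le> j" "j \<le> length ts"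
  shows "card {K \<in> avail k ts. Nd j \<in> K} = k + (k - 1) * node_outdeg ts j"
proof -
  let ?C = "\<lambda>(i,w). Cq ts i w"
  let ?P = "{p \<in> Sg ts. Nd j \<in> ?C p}"
  have eq: "{K \<in> avail k ts. Nd j \<in> K} = ?C ` ?P"
    unfolding avail_decomp by (auto simp: root_clique_def)
  have "card {K \<in> avail k ts. Nd j \<in> K} = card ?P"
    unfolding eq using Cq_inj[OF assms(1,2)] by (intro card_image) (auto intro: inj_on_subset)
  also have "?P = Sigma {..<length ts} (\<lambda>i. {w \<in> fst (ts ! i). Nd j \<in> Cq ts i w})"
    unfolding Sg_def by auto
  also have "card \<dots> = (\<Sum>i<length ts. card {w \<in> fst (ts ! i). Nd j \<in> Cq ts i w})"
    using Ki[OF assms(1,2)] by (subst card_SigmaI) auto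
  also have "\<dots> = (\<Sum>i<length ts. (if i = j - 1 then k else 0) + (if Nd j \<in> fst (ts ! i) then k - 1 else 0))"
  proof (rule sum.cong[OF refl])
    fix i assume "i \<in> {..<length ts}"
    then have il: "i < length ts" by simp
    note K = Ki[OF assms(1,2) il]
    show "card {w \<in> fst (ts ! i). Nd j \<in> Cq ts i w} =
        (if i = j - 1 then k else 0) + (if Nd j \<in> fst (ts ! i) then k - 1 else 0)"
    proof (cases "i = j - 1")
      case True
      then have "Nd j \<notin> fst (ts ! i)" using K assms(3) by (auto simp: Vs_def)
      moreover have "{w \<in> fst (ts ! i). Nd j \<in> Cq ts i w} = fst (ts ! i)"
        using True assms(3) by (auto simp: Cq_def)
      ultimately show ?thesis using K True by simp
    next
      case False
      then have "{w \<in> fst (ts ! i). Nd j \<in> Cq ts i w} =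
          (if Nd j \<in> fst (ts ! i) then fst (ts ! i) - {Nd j} else {})"
        using assms(3) by (auto simp: Cq_def)
      then show ?thesis using K False by simp
    qed
  qed
  also have "\<dots> = k + (k - 1) * node_outdeg ts j"
  proof -
    have "(\<Sum>i<length ts. (if i = j - 1 then k else 0)) = k" using assms by simp
    moreover have "(\<Sum>i<length ts. (if Nd j \<in> fst (ts ! i) then k - 1 else 0)) = (k - 1) * node_outdeg ts j"
    proof -
      have "(\<Sum>i<length ts. (if Nd j \<in> fst (ts ! i) then k - 1 else 0)) =
          (\<Sum>i\<in>{i\<in>{..<length ts}. Nd j \<in> fst (ts ! i)}. k - 1)"
        using sum.inter_filter[of "{..<length ts}" "\<lambda>_. k - 1" "\<lambda>i. Nd j \<in> fst (ts ! i)"] by simp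
      also have "{i\<in>{..<length ts}. Nd j \<in> fst (ts ! i)} = {i. i < length ts \<and> Nd j \<in> fst (ts ! i)}"
        by auto
      also have "(\<Sum>i\<in>{i. i < length ts \<and> Nd j \<in> fst (ts ! i)}. k - 1) =
          (k - 1) * card {i. i < length ts \<and> Nd j \<in> fst (ts ! i)}" by simp
      finally show ?thesis unfolding node_outdeg_def .
    qed
    ultimately show ?thesis by (simp add: sum.distrib)
  qed
  finally show ?thesis .
qed

lemma card_ext_with:
  assumes "valid_tree k ts" "k \<ge> 1" "1 \<le> j" "j \<le> length ts"
  shows "card {x \<in> ext k ts. Nd j \<in> fst x} = k + k * node_outdeg ts j"
proof -
  have "{x \<in> ext k ts. Nd j \<in> fst x} = {x \<in> ext k ts. fst x \<in> {K \<in> avail k ts. Nd j \<in> K}}"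
    unfolding ext_def by auto
  also have "card \<dots> = card {K \<in> avail k ts. Nd j \<in> K} +
      card {i. i < length ts \<and> fst (ts ! i) \<in> {K \<in> avail k ts. Nd j \<in> K}}"
    by (rule card_ext_gen[OF assms(1,2)]) auto
  also have "{i. i < length ts \<and> fst (ts ! i) \<in> {K \<in> avail k ts. Nd j \<in> K}} =
      {i. i < length ts \<and> Nd j \<in> fst (ts ! i)}" using Ki[OF assms(1,2)] by auto
  finally have "card {x \<in> ext k ts. Nd j \<in> fst x} = k + (k - 1) * node_outdeg ts j + node_outdeg ts j"
    using card_Sj[OF assms] unfolding node_outdeg_def by simp
  then show ?thesis using assms(2) by (cases k) (auto simp: algebra_simps)
qed


lemma ktrees_0: "ktrees k 0 = {[]}"
  unfolding ktrees_def using valid_Nil by auto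

lemma ktrees_Suc: "ktrees k (Suc n) = (\<lambda>(ts,x). ts @ [x]) ` Sigma (ktrees k n) (ext k)"
proof (intro equalityI subsetI)
  fix t assume t: "t \<in> ktrees k (Suc n)"
  then have "length t = Suc n" by (simp add: ktrees_def)
  then obtain ts x where tx: "t = ts @ [x]" "length ts = n"
    by (metis length_Suc_conv_rev)
  with t have "valid_tree k (ts @ [x])" by (simp add: ktrees_def)
  then have "ts \<in> ktrees k n" "x \<in> ext k ts"
    using tx by (cases x, auto simp: valid_snoc ktrees_def ext_def)+
  then show "t \<in> (\<lambda>(ts,x). ts @ [x]) ` Sigma (ktrees k n) (ext k)" using tx by force
next
  fix t assume "t \<in> (\<lambda>(ts,x). ts @ [x]) ` Sigma (ktrees k n) (ext k)"
  then obtain ts x where "t = ts @ [x]" "ts \<in> ktrees k n" "x \<in> ext k ts" by auto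
  then show "t \<in> ktrees k (Suc n)"
    by (cases x) (auto simp: valid_snoc ktrees_def ext_def)
qed

lemma finite_ktrees: assumes "k \<ge> 1" shows "finite (ktrees k n)"
proof (induction n)
  case 0 then show ?case by (simp add: ktrees_0)
next
  case (Suc n)
  have "finite (Sigma (ktrees k n) (ext k))"
    using Suc finite_ext[OF _ assms] by (auto simp: ktrees_def intro!: finite_SigmaI)
  then show ?case unfolding ktrees_Suc by simp
qed

lemma card_filter_Suc:
  assumes "k \<ge> 1"
  shows "card {t \<in> ktrees k (Suc n). P t} = (\<Sum>ts\<in>ktrees k n. card {x \<in> ext k ts. P (ts @ [x])})"
proof -
  have eq: "{t \<in> ktrees k (Suc n). P t} =
      (\<lambda>(ts,x). ts @ [x]) ` Sigma (ktrees k n) (\<lambda>ts. {x \<in> ext k ts. P (ts @ [x])})"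
    unfolding ktrees_Suc by auto
  have inj: "inj_on (\<lambda>(ts,x). ts @ [x]) (Sigma (ktrees k n) (\<lambda>ts. {x \<in> ext k ts. P (ts @ [x])}))"
    by (auto simp: inj_on_def)
  have "\<forall>ts\<in>ktrees k n. finite {x \<in> ext k ts. P (ts @ [x])}"
    using finite_ext[OF _ assms] by (auto simp: ktrees_def)
  then show ?thesis unfolding eq using inj finite_ktrees[OF assms]
    by (simp add: card_image)
qed

lemma Tsize_Suc: assumes "k \<ge> 1" shows "Tsize k (Suc n) = Tsize k n * ((k + 1) * n + 1)"
proof -
  have "Tsize k (Suc n) = card {t \<in> ktrees k (Suc n). True}" by (simp add: Tsize_def)
  also have "\<dots> = (\<Sum>ts\<in>ktrees k n. card (ext k ts))"
    using card_filter_Suc[OF assms, of n "\<lambda>_. True"] by simp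
  also have "\<dots> = (\<Sum>ts\<in>ktrees k n. (k + 1) * n + 1)"
    using card_ext[OF _ assms] by (intro sum.cong) (auto simp: ktrees_def)
  finally show ?thesis by (simp add: Tsize_def)
qed

lemma Tsize_prod: assumes "k \<ge> 1" shows "Tsize k n = (\<Prod>l<n. 1 + (k + 1) * l)"
proof (induction n)
  case 0 then show ?case by (simp add: Tsize_def ktrees_0)
next
  case (Suc n) then show ?case by (simp add: Tsize_Suc[OF assms])
qed

lemma sum_if_const:
  assumes "finite A"
  shows "(\<Sum>x\<in>A. if P x then (c::int) else 0) = int (card {x \<in> A. P x}) * c"
  using sum.inter_filter[OF assms, of "\<lambda>_. c" P] by simp

lemma Tcount_Suc:
  assumes "k \<ge> 1" "1 \<le> j" "j \<le> n"
  shows "int (Tcount k (Suc n) j m) =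
     (int ((k + 1) * n + 1) - int (k + k * m)) * int (Tcount k n j m)
     + int (k * m) * int (card {ts \<in> ktrees k n. Suc (node_outdeg ts j) = m})"
proof -
  have "int (Tcount k (Suc n) j m) =
      (\<Sum>ts\<in>ktrees k n. int (card {x \<in> ext k ts. node_outdeg (ts @ [x]) j = m}))"
    unfolding Tcount_def card_filter_Suc[OF assms(1)] by simp
  also have "\<dots> = (\<Sum>ts\<in>ktrees k n.
      (if node_outdeg ts j = m then int ((k + 1) * n + 1) - int (k + k * m) else 0)
      + (if Suc (node_outdeg ts j) = m then int (k * m) else 0))"
  proof (rule sum.cong[OF refl])
    fix ts assume "ts \<in> ktrees k n"
    then have v: "valid_tree k ts" and l: "length ts = n" by (auto simp: ktrees_def)
    define d where "d = node_outdeg ts j"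
    let ?A = "ext k ts"
    let ?W = "{x \<in> ?A. Nd j \<in> fst x}"
    let ?N = "{x \<in> ?A. Nd j \<notin> fst x}"
    have fA: "finite ?A" using finite_ext[OF v assms(1)] .
    have cW: "card ?W = k + k * d" unfolding d_def using card_ext_with[OF v assms(1,2)] assms(3) l by simp
    have "card ?A = card ?W + card ?N"
    proof -
      have "?A = ?W \<union> ?N" by auto
      moreover have "?W \<inter> ?N = {}" by auto
      ultimately show ?thesis using fA by (metis (no_types, lifting) card_Un_disjoint finite_Un)
    qed
    then have cN: "int (card ?N) = int ((k + 1) * n + 1) - int (k + k * d)"
      using card_ext[OF v assms(1)] cW l by simp
    have set: "{x \<in> ?A. node_outdeg (ts @ [x]) j = m} =
        (if d = m then ?N else {}) \<union> (if Suc d = m then ?W else {})"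
      unfolding node_outdeg_snoc d_def by auto
    show "int (card {x \<in> ?A. node_outdeg (ts @ [x]) j = m}) =
      (if node_outdeg ts j = m then int ((k + 1) * n + 1) - int (k + k * m) else 0)
      + (if Suc (node_outdeg ts j) = m then int (k * m) else 0)"
    proof (cases "d = m")
      case True
      then show ?thesis using set cN unfolding d_def by simp
    next
      case False
      show ?thesis
      proof (cases "Suc d = m")
        case True
        then have km: "k * m = k + k * d" by auto
        show ?thesis using set cW False True km unfolding d_def by simp
      next
        case False2: False
        have "{x \<in> ext k ts. node_outdeg (ts @ [x]) j = m} = {}" using set False False2 by simp
        then show ?thesis using False False2 unfolding d_def by (simp only: card.empty) simp
      qed
    qed
  qed
  also have "\<dots> = (int ((k + 1) * n + 1) - int (k + k * m)) * int (Tcount k n j m)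
     + int (k * m) * int (card {ts \<in> ktrees k n. Suc (node_outdeg ts j) = m})"
    unfolding sum.distrib Tcount_def
    by (simp add: sum_if_const[OF finite_ktrees[OF assms(1)]] mult.commute)
  finally show ?thesis .
qed

lemma Tcount_rec:
  assumes "k \<ge> 1" "1 \<le> j" "j < N"
  shows "int (Tcount k N j m)
              = (int ((k + 1) * N) - int (k * m) - int (2 * k)) * int (Tcount k (N - 1) j m)
                + int (k * m) * int (Tcount k (N - 1) j (m - 1))"
proof -
  obtain n where N: "N = Suc n" and jn: "j \<le> n" using assms(3) by (cases N) auto
  have c: "int ((k + 1) * Suc n) - int (k * m) - int (2 * k) = int ((k + 1) * n + 1) - int (k + k * m)"
    by (simp add: algebra_simps)
  have d: "int (k * m) * int (card {ts \<in> ktrees k n. Suc (node_outdeg ts j) = m})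
      = int (k * m) * int (Tcount k n j (m - 1))"
  proof (cases m)
    case 0 then show ?thesis by simp
  next
    case (Suc m') then show ?thesis unfolding Tcount_def by simp
  qed
  note e = Tcount_Suc[OF assms(1,2) jn, of m]
  from e[unfolded d] show ?thesis by (simp only: N diff_Suc_1 c)
qed

lemma Tcount_base:
  assumes "k \<ge> 1" shows "Tcount k j j m = (if m = 0 then Tsize k j else 0)"
proof -
  have "\<forall>ts\<in>ktrees k j. node_outdeg ts j = 0"
  proof
    fix ts assume "ts \<in> ktrees k j"
    then have v: "valid_tree k ts" and l: "length ts = j" by (auto simp: ktrees_def)
    have "{i. i < length ts \<and> Nd j \<in> fst (ts ! i)} = {}"
    proof -
      { fix i assume i: "i < length ts" "Nd j \<in> fst (ts ! i)"
        then have "Nd j \<in> Vs k i" using Ki[OF v assms i(1)] by blast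
        then have False using i l by (auto simp: Vs_def) }
      then show ?thesis by auto
    qed
    then show "node_outdeg ts j = 0" by (simp add: node_outdeg_def)
  qed
  then have "{ts \<in> ktrees k j. node_outdeg ts j = m} = (if m = 0 then ktrees k j else {})" by auto
  then show ?thesis unfolding Tcount_def Tsize_def by simp
qed

lemma Tcount_big: assumes "m > n" shows "Tcount k n j m = 0"
proof -
  have "{ts \<in> ktrees k n. node_outdeg ts j = m} = {}"
  proof -
    { fix ts assume t: "ts \<in> ktrees k n" "node_outdeg ts j = m"
      then have "length ts = n" by (simp add: ktrees_def)
      with node_outdeg_le[of ts j] t assms have False by simp }
    then show ?thesis by auto
  qed
  then show ?thesis unfolding Tcount_def by (simp only: card.empty)
qed



lemma P_nth: "fps_nth (fps_lin_pow c a) n = (- c) ^ n * (a gchoose n)"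
  unfolding fps_lin_pow_def by simp

lemma P_0: "fps_lin_pow c 0 = 1"
  by (simp add: fps_eq_iff P_nth gbinomial_0_left)

lemma P_nth0: "fps_nth (fps_lin_pow c a) 0 = 1"
  by (simp add: P_nth)

lemma P_mult: "fps_lin_pow c a * fps_lin_pow c b = fps_lin_pow c (a + b)"
  unfolding fps_lin_pow_def fps_binomial_add_mult
  by (rule fps_compose_mult_distrib[symmetric]) simp

lemma D_nth: "fps_nth ((1 - fps_const c * fps_X) * fps_deriv (f :: real fps)) n
   = of_nat (n + 1) * fps_nth f (n + 1) - c * of_nat n * fps_nth f n"
proof -
  have "(1 - fps_const c * fps_X) * fps_deriv f = fps_deriv f - fps_const c * (fps_X * fps_deriv f)"
    by (simp add: algebra_simps)
  then show ?thesis by (cases n) (simp_all add: fps_X_mult_nth algebra_simps)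
qed

lemma gch_rec: "of_nat (Suc n) * ((a::real) gchoose Suc n) + of_nat n * (a gchoose n) = a * (a gchoose n)"
  using gbinomial_absorption[of n a] gbinomial_absorb_comp[of a n] by (simp add: algebra_simps)

lemma P_ode: "(1 - fps_const c * fps_X) * fps_deriv (fps_lin_pow c a) = fps_const (- c * a) * fps_lin_pow c a"
proof (rule fps_ext)
  fix n
  have "fps_nth ((1 - fps_const c * fps_X) * fps_deriv (fps_lin_pow c a)) n
      = of_nat (n + 1) * ((- c) ^ (n + 1) * (a gchoose (n + 1))) - c * of_nat n * ((- c) ^ n * (a gchoose n))"
    by (simp add: D_nth P_nth)
  also have "\<dots> = - c * (- c) ^ n * (of_nat (Suc n) * (a gchoose Suc n) + of_nat n * (a gchoose n))"
    by (simp add: algebra_simps)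
  also have "\<dots> = - c * (- c) ^ n * (a * (a gchoose n))" by (simp only: gch_rec)
  also have "\<dots> = fps_nth (fps_const (- c * a) * fps_lin_pow c a) n" by (simp add: P_nth)
  finally show "fps_nth ((1 - fps_const c * fps_X) * fps_deriv (fps_lin_pow c a)) n =
      fps_nth (fps_const (- c * a) * fps_lin_pow c a) n" .
qed

lemma ode_unique:
  assumes "(1 - fps_const c * fps_X) * fps_deriv (f :: real fps) = fps_const \<alpha> * f" "fps_nth f 0 = 0"
  shows "f = 0"
proof -
  have "fps_nth f n = 0" for n
  proof (induction n)
    case 0 then show ?case using assms(2) .
  next
    case (Suc n)
    have "fps_nth ((1 - fps_const c * fps_X) * fps_deriv f) n = fps_nth (fps_const \<alpha> * f) n"
      using assms(1) by simp
    then have "of_nat (n + 1) * fps_nth f (n + 1) - c * of_nat n * fps_nth f n = \<alpha> * fps_nth f n"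
      by (simp add: D_nth)
    with Suc show ?case by simp
  qed
  then show ?thesis by (simp add: fps_eq_iff)
qed



definition gam :: "nat \<Rightarrow> nat \<Rightarrow> real" where
  "gam k j = real k * real j - real k + real j + 1"
definition WW :: "nat \<Rightarrow> real fps" where
  "WW k = 1 - fps_lin_pow (real (k + 1)) (real k / real (k + 1))"
definition QQ :: "nat \<Rightarrow> nat \<Rightarrow> real fps" where
  "QQ k j = fps_lin_pow (real (k + 1)) (- (gam k j / real (k + 1)))"
definition AA :: "nat \<Rightarrow> nat \<Rightarrow> nat \<Rightarrow> real fps" where
  "AA k j m = Abs_fps (\<lambda>i. real (Tcount k (j + i) j m) / fact i)"
definition HH :: "nat \<Rightarrow> nat \<Rightarrow> nat \<Rightarrow> real fps" where
  "HH k j m = fps_const (real (Tsize k j)) * WW k ^ m * QQ k j"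

lemma real_rec:
  assumes "k \<ge> 1" "j \<ge> 1"
  shows "real (Tcount k (j + Suc i) j m) =
     (real (k + 1) * real i + gam k j - real k * real m) * real (Tcount k (j + i) j m)
     + real k * real m * real (Tcount k (j + i) j (m - 1))"
proof -
  have "int (Tcount k (j + Suc i) j m) =
     (int ((k + 1) * (j + Suc i)) - int (k * m) - int (2 * k)) * int (Tcount k (j + i) j m)
     + int (k * m) * int (Tcount k (j + i) j (m - 1))"
    using Tcount_rec[OF assms, of "j + Suc i" m] by simp
  then have "real_of_int (int (Tcount k (j + Suc i) j m)) = real_of_int (
     (int ((k + 1) * (j + Suc i)) - int (k * m) - int (2 * k)) * int (Tcount k (j + i) j m)
     + int (k * m) * int (Tcount k (j + i) j (m - 1)))" by simp
  then show ?thesis unfolding gam_def by (simp add: algebra_simps)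
qed

lemma A_ode:
  assumes "k \<ge> 1" "j \<ge> 1"
  shows "(1 - fps_const (real (k + 1)) * fps_X) * fps_deriv (AA k j m)
     = fps_const (gam k j - real k * real m) * AA k j m + fps_const (real k * real m) * AA k j (m - 1)"
proof (rule fps_ext)
  fix i
  let ?a = "\<lambda>i m. real (Tcount k (j + i) j m)"
  have "fps_nth ((1 - fps_const (real (k + 1)) * fps_X) * fps_deriv (AA k j m)) i
     = real (i + 1) * (?a (Suc i) m / fact (Suc i)) - real (k + 1) * real i * (?a i m / fact i)"
    by (simp add: D_nth AA_def)
  also have "\<dots> = (?a (Suc i) m - real (k + 1) * real i * ?a i m) / fact i"
  proof -
    have f: "(fact i :: real) > 0" by simp
    have "real (i + 1) * (?a (Suc i) m / fact (Suc i)) = ?a (Suc i) m / fact i"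
      using f by (simp add: fact_Suc field_simps del: of_nat_Suc)
    then show ?thesis by (simp add: diff_divide_distrib)
  qed
  also have "\<dots> = ((gam k j - real k * real m) * ?a i m + real k * real m * ?a i (m - 1)) / fact i"
    using real_rec[OF assms, of i m] by (simp add: algebra_simps)
  also have "\<dots> = fps_nth (fps_const (gam k j - real k * real m) * AA k j m
       + fps_const (real k * real m) * AA k j (m - 1)) i"
    by (simp add: AA_def add_divide_distrib)
  finally show "fps_nth ((1 - fps_const (real (k + 1)) * fps_X) * fps_deriv (AA k j m)) i =
     fps_nth (fps_const (gam k j - real k * real m) * AA k j m + fps_const (real k * real m) * AA k j (m - 1)) i" .
qed


lemma ring_id:
  fixes T N K W Y Q G :: "'a::comm_ring_1"
  shows "T * ((N + 1) * (K * (1 - W)) * Y * Q + (W * Y) * (G * Q))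
    = (G - K * (N + 1)) * (T * (W * Y) * Q) + (K * (N + 1)) * (T * Y * Q)"
  by (simp add: algebra_simps)

lemma Q_ode: "(1 - fps_const (real (k + 1)) * fps_X) * fps_deriv (QQ k j) = fps_const (gam k j) * QQ k j"
proof -
  have e: "- real (k + 1) * (- (gam k j / real (k + 1))) = gam k j" by (simp del: of_nat_Suc)
  show ?thesis unfolding QQ_def P_ode e ..
qed

lemma W_ode: "(1 - fps_const (real (k + 1)) * fps_X) * fps_deriv (WW k) = fps_const (real k) * (1 - WW k)"
proof -
  have "(1 - fps_const (real (k + 1)) * fps_X) * fps_deriv (WW k) =
     - ((1 - fps_const (real (k + 1)) * fps_X) * fps_deriv (fps_lin_pow (real (k + 1)) (real k / real (k + 1))))"
    unfolding WW_def by simp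
  also have "\<dots> = fps_const (real k) * fps_lin_pow (real (k + 1)) (real k / real (k + 1))"
    unfolding P_ode by (simp add: fps_const_neg[symmetric] del: fps_const_neg of_nat_Suc)
  finally show ?thesis by (simp add: WW_def)
qed

lemma W0: "fps_nth (WW k) 0 = 0" by (simp add: WW_def P_nth0)
lemma Q0: "fps_nth (QQ k j) 0 = 1" by (simp add: QQ_def P_nth0)

lemma H_ode:
  "(1 - fps_const (real (k + 1)) * fps_X) * fps_deriv (HH k j m)
     = fps_const (gam k j - real k * real m) * HH k j m + fps_const (real k * real m) * HH k j (m - 1)"
proof (cases m)
  case 0
  have "(1 - fps_const (real (k + 1)) * fps_X) * fps_deriv (HH k j m)
      = fps_const (real (Tsize k j)) * ((1 - fps_const (real (k + 1)) * fps_X) * fps_deriv (QQ k j))"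
    using 0 by (simp add: HH_def algebra_simps)
  also have "\<dots> = fps_const (gam k j - real k * real m) * HH k j m + fps_const (real k * real m) * HH k j (m - 1)"
    unfolding Q_ode using 0 by (simp add: HH_def algebra_simps)
  finally show ?thesis .
next
  case (Suc n)
  let ?D = "1 - fps_const (real (k + 1)) * fps_X"
  let ?T = "fps_const (real (Tsize k j))"
  let ?W = "WW k" let ?Q = "QQ k j"
  have "fps_deriv (HH k j m) = ?T * (fps_const (of_nat (Suc n)) * fps_deriv ?W * ?W ^ n * ?Q + ?W ^ Suc n * fps_deriv ?Q)"
    unfolding HH_def Suc by (simp add: fps_deriv_power algebra_simps del: power_Suc)
  then have "?D * fps_deriv (HH k j m) = ?T * (fps_const (of_nat (Suc n)) * (?D * fps_deriv ?W) * ?W ^ n * ?Q + ?W ^ Suc n * (?D * fps_deriv ?Q))"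
    by (simp add: algebra_simps del: power_Suc)
  also have "\<dots> = ?T * ((fps_const (real n) + 1) * (fps_const (real k) * (1 - ?W)) * ?W ^ n * ?Q + (?W * ?W ^ n) * (fps_const (gam k j) * ?Q))"
    unfolding W_ode Q_ode by (simp add: fps_const_add[symmetric] del: fps_const_add)
  also have "\<dots> = (fps_const (gam k j) - fps_const (real k) * (fps_const (real n) + 1)) * (?T * (?W * ?W ^ n) * ?Q)
       + (fps_const (real k) * (fps_const (real n) + 1)) * (?T * ?W ^ n * ?Q)"
    by (rule ring_id)
  also have "\<dots> = fps_const (gam k j - real k * real m) * HH k j m + fps_const (real k * real m) * HH k j (m - 1)"
    unfolding HH_def Suc by (simp add: fps_const_mult[symmetric] fps_const_add[symmetric] fps_const_sub[symmetric]
       del: fps_const_mult fps_const_add fps_const_sub) (simp add: algebra_simps)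
  finally show ?thesis .
qed

lemma A_eq_H:
  assumes "k \<ge> 1" "j \<ge> 1"
  shows "AA k j m = HH k j m"
proof (induction m)
  case 0
  let ?f = "AA k j 0 - HH k j 0"
  let ?D = "1 - fps_const (real (k + 1)) * fps_X"
  have "?D * fps_deriv ?f = ?D * fps_deriv (AA k j 0) - ?D * fps_deriv (HH k j 0)"
    by (simp add: algebra_simps)
  also have "\<dots> = fps_const (gam k j) * ?f"
    unfolding A_ode[OF assms, of 0] H_ode[of k j 0] by (simp add: algebra_simps)
  finally have "?D * fps_deriv ?f = fps_const (gam k j) * ?f" .
  moreover have "fps_nth ?f 0 = 0"
    using Tcount_base[OF assms(1), of j 0] by (simp add: AA_def HH_def Q0 Tsize_def)
  ultimately show ?case using ode_unique by fastforce
next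
  case (Suc n)
  let ?f = "AA k j (Suc n) - HH k j (Suc n)"
  let ?D = "1 - fps_const (real (k + 1)) * fps_X"
  have "?D * fps_deriv ?f = ?D * fps_deriv (AA k j (Suc n)) - ?D * fps_deriv (HH k j (Suc n))"
    by (simp add: algebra_simps)
  also have "\<dots> = fps_const (gam k j - real k * real (Suc n)) * ?f"
    unfolding A_ode[OF assms, of "Suc n"] H_ode[of k j "Suc n"] using Suc.IH
    by (simp add: algebra_simps)
  finally have "?D * fps_deriv ?f = fps_const (gam k j - real k * real (Suc n)) * ?f" .
  moreover have "fps_nth ?f 0 = 0"
    using Tcount_base[OF assms(1), of j "Suc n"] by (simp add: AA_def HH_def Q0 W0 fps_power_zeroth)
  ultimately show ?case using ode_unique by fastforce
qed


lemma A_big: "j + i < m \<Longrightarrow> fps_nth (AA k j m) i = 0"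
  by (simp add: AA_def Tcount_big)

lemma AW: assumes "k \<ge> 1" "j \<ge> 1" shows "AA k j m * WW k = AA k j (Suc m)"
  unfolding A_eq_H[OF assms] HH_def by (simp add: algebra_simps)

definition FF :: "nat \<Rightarrow> nat \<Rightarrow> real \<Rightarrow> real fps" where
  "FF k j v = Abs_fps (\<lambda>i. \<Sum>m\<le>j + i. real (Tcount k (j + i) j m) * v ^ m / fact i)"

lemma FF_nth: "l \<le> i \<Longrightarrow> fps_nth (FF k j v) l = (\<Sum>m\<le>j + i. v ^ m * fps_nth (AA k j m) l)"
proof -
  assume li: "l \<le> i"
  have "fps_nth (FF k j v) l = (\<Sum>m\<le>j + l. v ^ m * fps_nth (AA k j m) l)"
    unfolding FF_def AA_def by (simp add: algebra_simps)
  also have "\<dots> = (\<Sum>m\<le>j + i. v ^ m * fps_nth (AA k j m) l)"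
    by (rule sum.mono_neutral_left) (use li A_big in auto)
  finally show ?thesis .
qed

lemma FF_W:
  assumes "k \<ge> 1" "j \<ge> 1"
  shows "FF k j v * (1 - fps_const v * WW k) = AA k j 0"
proof (rule fps_ext)
  fix i
  let ?B = "j + i"
  have "fps_nth (FF k j v * WW k) i = (\<Sum>l=0..i. fps_nth (FF k j v) l * fps_nth (WW k) (i - l))"
    by (simp add: fps_mult_nth)
  also have "\<dots> = (\<Sum>l=0..i. \<Sum>m\<le>?B. v ^ m * (fps_nth (AA k j m) l * fps_nth (WW k) (i - l)))"
    by (intro sum.cong refl) (simp add: FF_nth sum_distrib_right mult.assoc)
  also have "\<dots> = (\<Sum>m\<le>?B. \<Sum>l=0..i. v ^ m * (fps_nth (AA k j m) l * fps_nth (WW k) (i - l)))"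
    by (rule sum.swap)
  also have "\<dots> = (\<Sum>m\<le>?B. v ^ m * fps_nth (AA k j m * WW k) i)"
    by (simp add: fps_mult_nth sum_distrib_left)
  also have "\<dots> = (\<Sum>m\<le>?B. v ^ m * fps_nth (AA k j (Suc m)) i)"
    using AW[OF assms] by simp
  finally have fw: "fps_nth (FF k j v * WW k) i = (\<Sum>m\<le>?B. v ^ m * fps_nth (AA k j (Suc m)) i)" .
  have "fps_nth (FF k j v * (1 - fps_const v * WW k)) i = fps_nth (FF k j v) i - v * fps_nth (FF k j v * WW k) i"
    by (simp add: algebra_simps)
  also have "\<dots> = (\<Sum>m\<le>?B. v ^ m * fps_nth (AA k j m) i - v ^ Suc m * fps_nth (AA k j (Suc m)) i)"
    unfolding fw FF_nth[OF order_refl] by (simp add: sum_subtractf sum_distrib_left algebra_simps)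
  also have "\<dots> = fps_nth (AA k j 0) i - v ^ Suc ?B * fps_nth (AA k j (Suc ?B)) i"
    using sum_telescope[of "\<lambda>m. v ^ m * fps_nth (AA k j m) i" "j + i"] by simp
  also have "\<dots> = fps_nth (AA k j 0) i" by (simp add: A_big)
  finally show "fps_nth (FF k j v * (1 - fps_const v * WW k)) i = fps_nth (AA k j 0) i" .
qed

lemma gf:
  assumes "k \<ge> 1" "j \<ge> 1"
  shows "Abs_fps (\<lambda>i. \<Sum>m\<le>j + i. real (Tcount k (j + i) j m) * v ^ m / fact i)
            = fps_const (real (Tsize k j)) /
                ((1 - fps_const v * (1 - fps_lin_pow (real (k + 1)) (real k / real (k + 1))))
                 * fps_lin_pow (real (k + 1))
                     ((real k * real j - real k + real j + 1) / real (k + 1)))"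
proof -
  let ?M = "(1 - fps_const v * WW k) * fps_lin_pow (real (k + 1)) (gam k j / real (k + 1))"
  have M0: "fps_nth ?M 0 \<noteq> 0" by (simp add: W0 P_nth0)
  have "FF k j v * ?M = AA k j 0 * fps_lin_pow (real (k + 1)) (gam k j / real (k + 1))"
    using FF_W[OF assms, of v] by (simp add: mult.assoc[symmetric])
  also have "\<dots> = fps_const (real (Tsize k j))"
    unfolding A_eq_H[OF assms] HH_def QQ_def by (simp add: mult.assoc P_mult P_0)
  finally have e: "FF k j v * ?M = fps_const (real (Tsize k j))" .
  have "fps_const (real (Tsize k j)) / ?M = FF k j v * (?M * inverse ?M)"
    unfolding e[symmetric] fps_divide_unit[OF M0] by (simp add: mult.assoc)
  also have "\<dots> = FF k j v" using inverse_mult_eq_1'[OF M0] by simp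
  finally show ?thesis unfolding FF_def WW_def gam_def by simp
qed


theorem mainTheorem11:
  fixes k j :: nat
  assumes "k \<ge> 1" and "j \<ge> 1"
  shows "(\<forall>n m. n > j \<longrightarrow>
            int (Tcount k n j m)
              = (int ((k + 1) * n) - int (k * m) - int (2 * k)) * int (Tcount k (n - 1) j m)
                + int (k * m) * int (Tcount k (n - 1) j (m - 1)))
       \<and> Tsize k j = (\<Prod>l<j. 1 + (k + 1) * l)
       \<and> (\<forall>v :: real.
            Abs_fps (\<lambda>i. \<Sum>m\<le>j + i. real (Tcount k (j + i) j m) * v ^ m / fact i)
            = fps_const (real (Tsize k j)) /
                ((1 - fps_const v * (1 - fps_lin_pow (real (k + 1)) (real k / real (k + 1))))
                 * fps_lin_pow (real (k + 1))
                     ((real k * real j - real k + real j + 1) / real (k + 1))))"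
  using Tcount_rec[OF assms] Tsize_prod[OF assms(1)] gf[OF assms] by blast

end
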